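(* Define polynomials $Q_k(n)\in\mathbb{Q}[n]$ by $Q_0=1$, $Q_1=n$ and, for $k\ge 1$, $$Q_{k+1}(n)=(n-k)\,Q_k(n)+k(2n-k+1)\,Q_{k-1}(n).$$ Then for all integers $n\ge 0$ and $k\ge 0$, $$a_n^{(n-k)}=\frac{1}{k!}\,Q_k(n),$$ $Q_k$ has degree $k$, and explicitly $Q_2=n(n+1)$, $Q_3=(n-1)n(n+4)$, $Q_4=(n-1)n(n^2+7n-6)$, $Q_5=(n-2)(n-1)n(n+1)(n+12)$, $Q_6=(n-2)(n-1)n(n^3+18n^2+17n-120)$, $Q_7=(n-3)(n-2)(n-1)n(n^3+27n^2+116n-120)$, $Q_8=(n-3)(n-2)(n-1)n(n+1)(n+10)(n^2+23n-84)$, $Q_9=n(n-1)(n-2)(n-3)(n-4)(n^4+46n^3+467n^2+86n-3360)$, $Q_{10}=n(n-1)(n-2)(n-3)(n-4)(n^5+55n^4+665n^3-895n^2-16626n+15120)$.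
   Context: For integers $n\ge 0$ and $k\in\mathbb{Z}$, let $a_n^{(k)}$ be the coefficient of $x^{n+k}$ in $(1+x+x^2)^n$, so that $(1+x+x^2)^n=\sum_{k=-n}^{n}a_n^{(k)}x^{n+k}$ and $a_n^{(k)}=0$ for $|k|>n$. *)

theory Defs
  imports "HOL-Computational_Algebra.Polynomial"
begin

definition trinom :: "int poly" where
  "trinom = [:1, 1, 1:]"

definition acoef :: "nat \<Rightarrow> int \<Rightarrow> int" where
  "acoef n k = (if int n + k < 0 then 0 else coeff (trinom ^ n) (nat (int n + k)))"

definition nX :: "rat poly" where
  "nX = [:0, 1:]"

fun Q :: "nat \<Rightarrow> rat poly" where
  "Q 0 = 1"
| "Q (Suc 0) = nX"
| "Q (Suc (Suc k)) =
     (nX - of_nat (Suc k)) * Q (Suc k)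
     + smult (of_nat (Suc k)) (2 * nX - of_nat (Suc k) + 1) * Q k"

end

theory Submission
  imports Defs
begin

lemma Q0: "Q 0 = [:1:]" by (simp add: one_pCons)
lemma Q1: "Q 1 = [:0, 1:]" by (simp add: nX_def)
lemma Q2: "Q 2 = [:0, 1, 1:]"
proof -
  have "Q 2 = Q (Suc (Suc 0))" by (simp add: eval_nat_numeral numeral_2_eq_2 Q1[unfolded One_nat_def] del: Q.simps)
  also have "... = [:0, 1, 1:]"
    unfolding Q.simps(3) by (simp add: Q1 Q0 nX_def numeral_poly one_pCons Q1[unfolded One_nat_def] del: Q.simps)
  finally show ?thesis .
qed

lemma Q3: "Q 3 = [:0, -4, 3, 1:]"
proof -
  have "Q 3 = Q (Suc (Suc 1))" by (simp add: eval_nat_numeral numeral_2_eq_2 Q1[unfolded One_nat_def] del: Q.simps)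
  also have "... = [:0, -4, 3, 1:]"
    unfolding Q.simps(3) by (simp add: Q2 Q1 nX_def numeral_poly one_pCons Q1[unfolded One_nat_def] Q2[unfolded numeral_2_eq_2] del: Q.simps)
  finally show ?thesis .
qed

lemma Q4: "Q 4 = [:0, 6, -13, 6, 1:]"
proof -
  have "Q 4 = Q (Suc (Suc 2))" by (simp add: eval_nat_numeral numeral_2_eq_2 Q1[unfolded One_nat_def] del: Q.simps)
  also have "... = [:0, 6, -13, 6, 1:]"
    unfolding Q.simps(3) by (simp add: Q3 Q2 nX_def numeral_poly one_pCons Q1[unfolded One_nat_def] del: Q.simps)
  finally show ?thesis .
qed

lemma Q5: "Q 5 = [:0, 24, -10, -25, 10, 1:]"
proof -
  have "Q 5 = Q (Suc (Suc 3))" by (simp add: eval_nat_numeral numeral_2_eq_2 Q1[unfolded One_nat_def] del: Q.simps)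
  also have "... = [:0, 24, -10, -25, 10, 1:]"
    unfolding Q.simps(3) by (simp add: Q4 Q3 nX_def numeral_poly one_pCons Q1[unfolded One_nat_def] del: Q.simps)
  finally show ?thesis .
qed

lemma Q6: "Q 6 = [:0, -240, 394, -135, -35, 15, 1:]"
proof -
  have "Q 6 = Q (Suc (Suc 4))" by (simp add: eval_nat_numeral numeral_2_eq_2 Q1[unfolded One_nat_def] del: Q.simps)
  also have "... = [:0, -240, 394, -135, -35, 15, 1:]"
    unfolding Q.simps(3) by (simp add: Q5 Q4 nX_def numeral_poly one_pCons Q1[unfolded One_nat_def] del: Q.simps)
  finally show ?thesis .
qed

lemma Q7: "Q 7 = [:0, 720, -2016, 1834, -525, -35, 21, 1:]"
proof -
  have "Q 7 = Q (Suc (Suc 5))" by (simp add: eval_nat_numeral numeral_2_eq_2 Q1[unfolded One_nat_def] del: Q.simps)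
  also have "... = [:0, 720, -2016, 1834, -525, -35, 21, 1:]"
    unfolding Q.simps(3) by (simp add: Q6 Q5 nX_def numeral_poly one_pCons Q1[unfolded One_nat_def] del: Q.simps)
  finally show ?thesis .
qed

lemma Q8: "Q 8 = [:0, 5040, -5076, -3668, 5089, -1400, -14, 28, 1:]"
proof -
  have "Q 8 = Q (Suc (Suc 6))" by (simp add: eval_nat_numeral numeral_2_eq_2 Q1[unfolded One_nat_def] del: Q.simps)
  also have "... = [:0, 5040, -5076, -3668, 5089, -1400, -14, 28, 1:]"
    unfolding Q.simps(3) by (simp add: Q7 Q6 nX_def numeral_poly one_pCons Q1[unfolded One_nat_def] del: Q.simps)
  finally show ?thesis .
qed

lemma Q9: "Q 9 = [:0, -80640, 170064, -110692, 14364, 9849, -3024, 42, 36, 1:]"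
proof -
  have "Q 9 = Q (Suc (Suc 7))" by (simp add: eval_nat_numeral numeral_2_eq_2 Q1[unfolded One_nat_def] del: Q.simps)
  also have "... = [:0, -80640, 170064, -110692, 14364, 9849, -3024, 42, 36, 1:]"
    unfolding Q.simps(3) by (simp add: Q8 Q7 nX_def numeral_poly one_pCons Q1[unfolded One_nat_def] del: Q.simps)
  finally show ?thesis .
qed

lemma Q10: "Q 10 = [:0, 362880, -1155024, 1339020, -672400, 118125, 12873, -5670, 150, 45, 1:]"
proof -
  have "Q 10 = Q (Suc (Suc 8))" by (simp add: eval_nat_numeral numeral_2_eq_2 Q1[unfolded One_nat_def] del: Q.simps)
  also have "... = [:0, 362880, -1155024, 1339020, -672400, 118125, 12873, -5670, 150, 45, 1:]"
    unfolding Q.simps(3) by (simp add: Q9 Q8 nX_def numeral_poly one_pCons Q1[unfolded One_nat_def] del: Q.simps)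
  finally show ?thesis .
qed

lemma coeff3: "coeff ([:a,b,c:] * p) (Suc (Suc j)) = a * coeff p (Suc (Suc j)) + b * coeff p (Suc j) + c * coeff p j"
  "coeff ([:a,b,c:] * p) (Suc 0) = a * coeff p (Suc 0) + b * coeff p 0"
  "coeff ([:a,b,c:] * p) 0 = a * coeff p 0"
  by (simp_all add: mult_pCons_left coeff_pCons add.assoc split: nat.split)

lemma coeff2: "coeff ([:a,b:] * p) (Suc j) = a * coeff p (Suc j) + b * coeff p j"
  "coeff ([:a,b:] * p) 0 = a * coeff p 0"
  by (simp_all add: mult_pCons_left coeff_pCons split: nat.split)

lemma deriv_id: "trinom * pderiv (trinom ^ n) = smult (of_nat n) ([:1,2:] * trinom ^ n)"
proof (cases n)
  case 0 then show ?thesis by simp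
next
  case (Suc m)
  have "pderiv (trinom ^ n) = smult (of_nat n) (trinom ^ m) * pderiv trinom"
    unfolding Suc pderiv_power_Suc by simp
  moreover have "pderiv trinom = [:1,2:]" by (simp add: trinom_def pderiv_pCons)
  ultimately show ?thesis using Suc by (simp add: algebra_simps)
qed

definition cc :: "nat \<Rightarrow> nat \<Rightarrow> int" where "cc n j = coeff (trinom ^ n) j"

lemma cc0: "cc n 0 = 1"
  by (simp add: cc_def coeff_0_power trinom_def)

lemma deriv_coeff: "coeff (trinom * pderiv (trinom ^ n)) j = coeff (smult (of_nat n) ([:1,2:] * trinom ^ n)) j"
  by (simp only: deriv_id)

lemma cc1: "cc n 1 = int n"
  using deriv_coeff[of n 0]
  by (simp add: trinom_def coeff3 coeff2 coeff_pderiv cc_def coeff_0_power)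

lemma ccrec: "int (Suc (Suc j)) * cc n (Suc (Suc j))
   = (int n - int (Suc j)) * cc n (Suc j) + (2 * int n - int (Suc j) + 1) * cc n j"
proof (cases j)
  case 0
  then show ?thesis
    using deriv_coeff[of n 1] cc0[of n] cc1[of n]
    by (simp add: trinom_def coeff3 coeff2 coeff_pderiv cc_def algebra_simps)
next
  case (Suc i)
  then show ?thesis
    using deriv_coeff[of n "Suc j"]
    by (simp add: trinom_def coeff3 coeff2 coeff_pderiv cc_def algebra_simps)
qed

lemma main_cc: "fact k * of_int (cc n k) = poly (Q k) (of_nat n :: rat)"
proof (induction k rule: Q.induct)
  case 1 then show ?case by (simp add: cc0)
next
  case 2 then show ?case using cc1[of n] by (simp add: nX_def)
next
  case (3 k)
  have r: "of_int (int (Suc (Suc k)) * cc n (Suc (Suc k))) = (of_int ((int n - int (Suc k)) * cc n (Suc k) + (2 * int n - int (Suc k) + 1) * cc n k) :: rat)"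
    by (simp only: ccrec)
  have "fact (Suc (Suc k)) * (of_int (cc n (Suc (Suc k))) :: rat)
     = fact (Suc k) * of_int (int (Suc (Suc k)) * cc n (Suc (Suc k)))"
    by (simp add: algebra_simps)
  also have "\<dots> = fact (Suc k) * (of_int ((int n - int (Suc k)) * cc n (Suc k) + (2 * int n - int (Suc k) + 1) * cc n k))"
    using r by simp
  also have "\<dots> = (of_nat n - of_nat (Suc k)) * (fact (Suc k) * of_int (cc n (Suc k)))
     + of_nat (Suc k) * (2 * of_nat n - of_nat (Suc k) + 1) * (fact k * of_int (cc n k))"
    by (simp add: algebra_simps)
  also have "\<dots> = poly (Q (Suc (Suc k))) (of_nat n)"
    using 3 by (simp add: nX_def algebra_simps)
  finally show ?case .
qed

lemma deg_Q: "degree (Q k) = k"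
proof (induction k rule: Q.induct)
  case 1 then show ?case by simp
next
  case 2 then show ?case by (simp add: nX_def)
next
  case (3 k)
  have d1: "degree (nX - of_nat (Suc k)) = 1"
    by (simp add: nX_def of_nat_poly)
  have nz: "Q (Suc k) \<noteq> 0" using 3(1) by (metis Zero_not_Suc degree_0)
  have nz1: "nX - of_nat (Suc k) \<noteq> 0" using d1 by auto
  have A: "degree ((nX - of_nat (Suc k)) * Q (Suc k)) = Suc (Suc k)"
    using degree_mult_eq[OF nz1 nz] d1 3(1) by simp
  have d2: "degree (2 * nX - of_nat (Suc k) + 1 :: rat poly) \<le> 1"
    by (simp add: nX_def of_nat_poly numeral_poly one_pCons)
  have "degree (smult (of_nat (Suc k)) (2 * nX - of_nat (Suc k) + 1) * Q k) \<le> degree (smult (of_nat (Suc k)) (2 * nX - of_nat (Suc k) + 1 :: rat poly)) + degree (Q k)"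
    by (rule degree_mult_le)
  also have "\<dots> \<le> 1 + k" using d2 3(2) degree_smult_le
    by (metis add_le_mono1 order_trans)
  finally have B: "degree (smult (of_nat (Suc k)) (2 * nX - of_nat (Suc k) + 1) * Q k) < Suc (Suc k)" by simp
  show ?case using degree_add_eq_left[of _ "(nX - of_nat (Suc k)) * Q (Suc k)"] A B by simp
qed

lemma trinom_nz: "trinom \<noteq> 0" by (simp add: trinom_def)

lemma deg_pow: "degree (trinom ^ n) = 2 * n"
  using degree_power_eq[OF trinom_nz, of n] by (simp add: trinom_def)

lemma refl_t: "reflect_poly trinom = trinom"
  by (simp add: trinom_def reflect_poly_def)

lemma refl_pow: "reflect_poly (trinom ^ n) = trinom ^ n"
  by (simp add: reflect_poly_power refl_t)

lemma acoef_cc: "acoef n (int n - int k) = cc n k"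
proof (cases "k \<le> 2 * n")
  case True
  have "coeff (trinom ^ n) k = coeff (reflect_poly (trinom ^ n)) k" by (simp add: refl_pow)
  also have "\<dots> = coeff (trinom ^ n) (2 * n - k)" using True by (simp add: coeff_reflect_poly deg_pow)
  finally have "cc n k = coeff (trinom ^ n) (2 * n - k)" by (simp add: cc_def)
  moreover have "nat (int n + (int n - int k)) = 2 * n - k" using True by simp
  ultimately show ?thesis using True by (simp add: acoef_def)
next
  case False
  have "cc n k = 0" unfolding cc_def using False by (intro coeff_eq_0) (simp add: deg_pow)
  then show ?thesis using False by (simp add: acoef_def)
qed

theorem corollary1:
  shows "(\<forall>n k :: nat. of_int (acoef n (int n - int k)) = poly (Q k) (of_nat n) / fact k)
    \<and> (\<forall>k. degree (Q k) = k)
    \<and> Q 2 = nX * (nX + 1)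
    \<and> Q 3 = (nX - 1) * nX * (nX + 4)
    \<and> Q 4 = (nX - 1) * nX * (nX^2 + 7 * nX - 6)
    \<and> Q 5 = (nX - 2) * (nX - 1) * nX * (nX + 1) * (nX + 12)
    \<and> Q 6 = (nX - 2) * (nX - 1) * nX * (nX^3 + 18 * nX^2 + 17 * nX - 120)
    \<and> Q 7 = (nX - 3) * (nX - 2) * (nX - 1) * nX * (nX^3 + 27 * nX^2 + 116 * nX - 120)
    \<and> Q 8 = (nX - 3) * (nX - 2) * (nX - 1) * nX * (nX + 1) * (nX + 10) * (nX^2 + 23 * nX - 84)
    \<and> Q 9 = nX * (nX - 1) * (nX - 2) * (nX - 3) * (nX - 4)
              * (nX^4 + 46 * nX^3 + 467 * nX^2 + 86 * nX - 3360)
    \<and> Q 10 = nX * (nX - 1) * (nX - 2) * (nX - 3) * (nX - 4)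
              * (nX^5 + 55 * nX^4 + 665 * nX^3 - 895 * nX^2 - 16626 * nX + 15120)"
proof (intro conjI allI)
  fix n k :: nat
  show "of_int (acoef n (int n - int k)) = poly (Q k) (of_nat n) / fact k"
    using main_cc[of k n] by (simp add: acoef_cc field_simps)
next
  fix k show "degree (Q k) = k" by (rule deg_Q)
qed (unfold Q2 Q3 Q4 Q5 Q6 Q7 Q8 Q9 Q10, (simp add: nX_def numeral_poly one_pCons eval_nat_numeral del: Q.simps)+)

end
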